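(* Let $\Delta=\{\{1,3\},\{1,5\},\{3,5\}\}\in\mathcal{T}_6$. Then $\chi(\mathrm{KG}(\mathcal{T}_6\setminus\{\Delta\}))=4$.
   Context: Label the vertices of a convex hexagon by $1,\dots,6$ in cyclic order; $\mathrm{Diag}_6 = \{\{i,j\} \subseteq [6]: i-j\not\equiv \pm1 \pmod 6\}$; a triangulation is identified with its set of (three) diagonals, and $\mathcal{T}_6$ is the set of triangulations. For a set system $\mathcal{F}$, $\mathrm{KG}(\mathcal{F})$ is the graph on $\mathcal{F}$ with $F,F'$ adjacent iff $F\cap F'=\emptyset$. *)

theory Defs
  imports Main
begin

text \<open>Vertices of the convex hexagon are 1..6 in cyclic order.\<close>

definition Diag6 :: "nat set set" where
  "Diag6 = {{i, j} | i j. i \<in> {1..6} \<and> j \<in> {1..6} \<and> i \<noteq> j \<and>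
            (int i - int j) mod 6 \<noteq> 1 \<and> (int i - int j) mod 6 \<noteq> 5}"

text \<open>Two diagonals cross iff their endpoints interleave in the cyclic order.\<close>
definition crosses :: "nat set \<Rightarrow> nat set \<Rightarrow> bool" where
  "crosses e f \<longleftrightarrow> (\<exists>a b c d. ((e = {a, b} \<and> f = {c, d}) \<or> (e = {c, d} \<and> f = {a, b}))
                         \<and> a < c \<and> c < b \<and> b < d)"

definition noncrossing :: "nat set set \<Rightarrow> bool" where
  "noncrossing T \<longleftrightarrow> (\<forall>e\<in>T. \<forall>f\<in>T. \<not> crosses e f)"

text \<open>A triangulation is a maximal set of pairwise non-crossing diagonals.\<close>
definition T6 :: "nat set set set" where
  "T6 = {T. T \<subseteq> Diag6 \<and> noncrossing T \<and>
            (\<forall>d\<in>Diag6 - T. \<not> noncrossing (insert d T))}"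

definition kneser_colouring :: "'a set set \<Rightarrow> nat \<Rightarrow> ('a set \<Rightarrow> nat) \<Rightarrow> bool" where
  "kneser_colouring F k c \<longleftrightarrow> (\<forall>x\<in>F. c x < k) \<and>
      (\<forall>x\<in>F. \<forall>y\<in>F. x \<noteq> y \<and> x \<inter> y = {} \<longrightarrow> c x \<noteq> c y)"

definition chi_KG :: "'a set set \<Rightarrow> nat" where
  "chi_KG F = (LEAST k. \<exists>c. kneser_colouring F k c)"

end

theory Submission imports Defs begin

lemma Diag6_eq: "Diag6 = {{1,3},{1,4},{1,5},{2,4},{2,5},{2,6},{3,5},{3,6},{4,6}}"
proof
  show "Diag6 \<subseteq> {{1,3},{1,4},{1,5},{2,4},{2,5},{2,6},{3,5},{3,6},{4,6}}"
  proof
    fix x assume "x \<in> Diag6"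
    then obtain i j where x: "x = {i,j}" and ij: "i \<in> {1..6}" "j \<in> {1..6}" "i \<noteq> j"
      "(int i - int j) mod 6 \<noteq> 1" "(int i - int j) mod 6 \<noteq> 5" unfolding Diag6_def by blast
    from ij(1) have "i = 1 \<or> i = 2 \<or> i = 3 \<or> i = 4 \<or> i = 5 \<or> i = 6" by auto
    moreover from ij(2) have "j = 1 \<or> j = 2 \<or> j = 3 \<or> j = 4 \<or> j = 5 \<or> j = 6" by auto
    ultimately show "x \<in> {{1,3},{1,4},{1,5},{2,4},{2,5},{2,6},{3,5},{3,6},{4,6}}"
      using ij x by (elim disjE) (simp_all add: insert_commute)
  qed
next
  show "{{1,3},{1,4},{1,5},{2,4},{2,5},{2,6},{3,5},{3,6},{4,6}} \<subseteq> Diag6"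
    unfolding Diag6_def
    by (simp, intro conjI; (rule exI[of _ "{_,_}"])?; force)
qed

lemma crosses_iff: "a < b \<Longrightarrow> c < d \<Longrightarrow> crosses {a,b} {c,d} \<longleftrightarrow> (a<c\<and>c<b\<and>b<d) \<or> (c<a\<and>a<d\<and>d<b)"
  for a b c d :: nat
  unfolding crosses_def doubleton_eq_iff by auto


lemma T6_mem: assumes "T \<in> T6" "d \<in> Diag6"
  shows "d \<in> T \<longleftrightarrow> (\<forall>e\<in>Diag6. e \<in> T \<longrightarrow> \<not> crosses d e \<and> \<not> crosses e d)"
proof
  assume "d \<in> T" then show "\<forall>e\<in>Diag6. e \<in> T \<longrightarrow> \<not> crosses d e \<and> \<not> crosses e d"
    using assms unfolding T6_def noncrossing_def by blast
next
  assume h: "\<forall>e\<in>Diag6. e \<in> T \<longrightarrow> \<not> crosses d e \<and> \<not> crosses e d"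
  show "d \<in> T"
  proof (rule ccontr)
    assume "d \<notin> T"
    with assms have "\<not> noncrossing (insert d T)" unfolding T6_def by blast
    then obtain e f where ef: "e \<in> insert d T" "f \<in> insert d T" "crosses e f"
      unfolding noncrossing_def by blast
    have ncT: "noncrossing T" "T \<subseteq> Diag6" using assms unfolding T6_def by auto
    have "\<not> crosses d d" unfolding crosses_def by auto
    then show False using ef h ncT unfolding noncrossing_def by blast
  qed
qed

lemma set_eq_D: "T \<subseteq> D \<Longrightarrow> X \<subseteq> D \<Longrightarrow> (T = X) = (\<forall>d\<in>D. d \<in> T \<longleftrightarrow> d \<in> X)"
  by blast

lemma T6_sub: "T6 \<subseteq> {{{1,3},{1,5},{3,5}},{{1,3},{1,4},{1,5}},{{1,3},{1,4},{4,6}},{{1,3},{3,5},{3,6}},{{1,3},{3,6},{4,6}},{{1,4},{1,5},{2,4}},{{1,4},{2,4},{4,6}},{{1,5},{2,4},{2,5}},{{1,5},{2,5},{3,5}},{{2,4},{2,5},{2,6}},{{2,4},{2,6},{4,6}},{{2,5},{2,6},{3,5}},{{2,6},{3,5},{3,6}},{{2,6},{3,6},{4,6}}}"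
proof
  fix T assume T: "T \<in> T6"
  have sub: "T \<subseteq> Diag6" using T unfolding T6_def by auto
  have m13: "{1,3} \<in> T \<longleftrightarrow> {2,4} \<notin> T \<and> {2,5} \<notin> T \<and> {2,6} \<notin> T"
    using T6_mem[OF T, of "{1,3}"] by (simp add: Diag6_eq crosses_iff)
  have m14: "{1,4} \<in> T \<longleftrightarrow> {2,5} \<notin> T \<and> {2,6} \<notin> T \<and> {3,5} \<notin> T \<and> {3,6} \<notin> T"
    using T6_mem[OF T, of "{1,4}"] by (simp add: Diag6_eq crosses_iff)
  have m15: "{1,5} \<in> T \<longleftrightarrow> {2,6} \<notin> T \<and> {3,6} \<notin> T \<and> {4,6} \<notin> T"
    using T6_mem[OF T, of "{1,5}"] by (simp add: Diag6_eq crosses_iff)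
  have m24: "{2,4} \<in> T \<longleftrightarrow> {1,3} \<notin> T \<and> {3,5} \<notin> T \<and> {3,6} \<notin> T"
    using T6_mem[OF T, of "{2,4}"] by (simp add: Diag6_eq crosses_iff)
  have m25: "{2,5} \<in> T \<longleftrightarrow> {1,3} \<notin> T \<and> {1,4} \<notin> T \<and> {3,6} \<notin> T \<and> {4,6} \<notin> T"
    using T6_mem[OF T, of "{2,5}"] by (simp add: Diag6_eq crosses_iff)
  have m26: "{2,6} \<in> T \<longleftrightarrow> {1,3} \<notin> T \<and> {1,4} \<notin> T \<and> {1,5} \<notin> T"
    using T6_mem[OF T, of "{2,6}"] by (simp add: Diag6_eq crosses_iff)
  have m35: "{3,5} \<in> T \<longleftrightarrow> {1,4} \<notin> T \<and> {2,4} \<notin> T \<and> {4,6} \<notin> T"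
    using T6_mem[OF T, of "{3,5}"] by (simp add: Diag6_eq crosses_iff)
  have m36: "{3,6} \<in> T \<longleftrightarrow> {1,4} \<notin> T \<and> {1,5} \<notin> T \<and> {2,4} \<notin> T \<and> {2,5} \<notin> T"
    using T6_mem[OF T, of "{3,6}"] by (simp add: Diag6_eq crosses_iff)
  have m46: "{4,6} \<in> T \<longleftrightarrow> {1,5} \<notin> T \<and> {2,5} \<notin> T \<and> {3,5} \<notin> T"
    using T6_mem[OF T, of "{4,6}"] by (simp add: Diag6_eq crosses_iff)

  have "T = {{1,3},{1,4},{1,5}} \<or> T = {{1,3},{1,4},{4,6}} \<or> T = {{1,3},{3,5},{3,6}} \<or> T = {{1,3},{3,6},{4,6}} \<or> T = {{1,4},{1,5},{2,4}} \<or> T = {{1,4},{2,4},{4,6}} \<or> T = {{1,5},{2,4},{2,5}} \<or> T = {{1,5},{2,5},{3,5}} \<or> T = {{2,4},{2,5},{2,6}} \<or> T = {{2,4},{2,6},{4,6}} \<or> T = {{2,5},{2,6},{3,5}} \<or> T = {{2,6},{3,5},{3,6}} \<or> T = {{2,6},{3,6},{4,6}} \<or> T = {{1,3},{1,5},{3,5}}"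
    apply (simp add: set_eq_D[OF sub] Diag6_eq doubleton_eq_iff)
    using m13 m14 m15 m24 m25 m26 m35 m36 m46 unfolding One_nat_def by sat
  then show "T \<in> {{{1,3},{1,5},{3,5}},{{1,3},{1,4},{1,5}},{{1,3},{1,4},{4,6}},{{1,3},{3,5},{3,6}},{{1,3},{3,6},{4,6}},{{1,4},{1,5},{2,4}},{{1,4},{2,4},{4,6}},{{1,5},{2,4},{2,5}},{{1,5},{2,5},{3,5}},{{2,4},{2,5},{2,6}},{{2,4},{2,6},{4,6}},{{2,5},{2,6},{3,5}},{{2,6},{3,5},{3,6}},{{2,6},{3,6},{4,6}}}" by (simp only: insert_iff empty_iff simp_thms) sat
qed

lemma T6_0: "{{1,3},{1,4},{1,5}} \<in> T6"
  unfolding T6_def noncrossing_def Diag6_eq by (auto simp: crosses_iff)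
lemma T6_1: "{{1,3},{1,4},{4,6}} \<in> T6"
  unfolding T6_def noncrossing_def Diag6_eq by (auto simp: crosses_iff)
lemma T6_2: "{{1,3},{3,5},{3,6}} \<in> T6"
  unfolding T6_def noncrossing_def Diag6_eq by (auto simp: crosses_iff)
lemma T6_3: "{{1,3},{3,6},{4,6}} \<in> T6"
  unfolding T6_def noncrossing_def Diag6_eq by (auto simp: crosses_iff)
lemma T6_4: "{{1,4},{1,5},{2,4}} \<in> T6"
  unfolding T6_def noncrossing_def Diag6_eq by (auto simp: crosses_iff)
lemma T6_5: "{{1,4},{2,4},{4,6}} \<in> T6"
  unfolding T6_def noncrossing_def Diag6_eq by (auto simp: crosses_iff)
lemma T6_6: "{{1,5},{2,4},{2,5}} \<in> T6"
  unfolding T6_def noncrossing_def Diag6_eq by (auto simp: crosses_iff)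
lemma T6_7: "{{1,5},{2,5},{3,5}} \<in> T6"
  unfolding T6_def noncrossing_def Diag6_eq by (auto simp: crosses_iff)
lemma T6_8: "{{2,4},{2,5},{2,6}} \<in> T6"
  unfolding T6_def noncrossing_def Diag6_eq by (auto simp: crosses_iff)
lemma T6_9: "{{2,4},{2,6},{4,6}} \<in> T6"
  unfolding T6_def noncrossing_def Diag6_eq by (auto simp: crosses_iff)
lemma T6_10: "{{2,5},{2,6},{3,5}} \<in> T6"
  unfolding T6_def noncrossing_def Diag6_eq by (auto simp: crosses_iff)
lemma T6_11: "{{2,6},{3,5},{3,6}} \<in> T6"
  unfolding T6_def noncrossing_def Diag6_eq by (auto simp: crosses_iff)
lemma T6_12: "{{2,6},{3,6},{4,6}} \<in> T6"
  unfolding T6_def noncrossing_def Diag6_eq by (auto simp: crosses_iff)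
lemma T6_13: "{{1,3},{1,5},{3,5}} \<in> T6"
  unfolding T6_def noncrossing_def Diag6_eq by (auto simp: crosses_iff)

definition c3 :: "nat \<Rightarrow> bool" where "c3 x \<longleftrightarrow> x < 3"
lemma c3E: "c3 x \<Longrightarrow> (x = 0 \<Longrightarrow> P) \<Longrightarrow> (x = 1 \<Longrightarrow> P) \<Longrightarrow> (x = 2 \<Longrightarrow> P) \<Longrightarrow> P"
  unfolding c3_def by linarith
lemma no3: fixes x0 x1 x2 x5 x6 x7 x8 x9 x11 x12 :: nat
  assumes "c3 x0" "c3 x1" "c3 x2" "c3 x5" "c3 x6" "c3 x7" "c3 x8" "c3 x9" "c3 x11" "c3 x12" "x0 \<noteq> x8" "x0 \<noteq> x9" "x0 \<noteq> x11" "x0 \<noteq> x12" "x1 \<noteq> x6" "x1 \<noteq> x7" "x1 \<noteq> x8" "x1 \<noteq> x11" "x2 \<noteq> x5" "x2 \<noteq> x6" "x2 \<noteq> x8" "x2 \<noteq> x9" "x5 \<noteq> x7" "x5 \<noteq> x11" "x6 \<noteq> x11" "x6 \<noteq> x12" "x7 \<noteq> x9" "x7 \<noteq> x12"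
  shows False
proof -
  have v0: "x0 = 0 \<or> x0 = 1 \<or> x0 = 2" using \<open>c3 x0\<close> unfolding c3_def by auto
  have v1: "x1 = 0 \<or> x1 = 1 \<or> x1 = 2" using \<open>c3 x1\<close> unfolding c3_def by auto
  have v2: "x2 = 0 \<or> x2 = 1 \<or> x2 = 2" using \<open>c3 x2\<close> unfolding c3_def by auto
  have v5: "x5 = 0 \<or> x5 = 1 \<or> x5 = 2" using \<open>c3 x5\<close> unfolding c3_def by auto
  have v6: "x6 = 0 \<or> x6 = 1 \<or> x6 = 2" using \<open>c3 x6\<close> unfolding c3_def by auto
  have v7: "x7 = 0 \<or> x7 = 1 \<or> x7 = 2" using \<open>c3 x7\<close> unfolding c3_def by auto
  have v8: "x8 = 0 \<or> x8 = 1 \<or> x8 = 2" using \<open>c3 x8\<close> unfolding c3_def by auto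
  have v9: "x9 = 0 \<or> x9 = 1 \<or> x9 = 2" using \<open>c3 x9\<close> unfolding c3_def by auto
  have v11: "x11 = 0 \<or> x11 = 1 \<or> x11 = 2" using \<open>c3 x11\<close> unfolding c3_def by auto
  have v12: "x12 = 0 \<or> x12 = 1 \<or> x12 = 2" using \<open>c3 x12\<close> unfolding c3_def by auto
  have e0_8_0: "\<not> (x0 = 0 \<and> x8 = 0)" using \<open>x0 \<noteq> x8\<close> by auto
  have e0_8_1: "\<not> (x0 = 1 \<and> x8 = 1)" using \<open>x0 \<noteq> x8\<close> by auto
  have e0_8_2: "\<not> (x0 = 2 \<and> x8 = 2)" using \<open>x0 \<noteq> x8\<close> by auto
  have e0_9_0: "\<not> (x0 = 0 \<and> x9 = 0)" using \<open>x0 \<noteq> x9\<close> by auto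
  have e0_9_1: "\<not> (x0 = 1 \<and> x9 = 1)" using \<open>x0 \<noteq> x9\<close> by auto
  have e0_9_2: "\<not> (x0 = 2 \<and> x9 = 2)" using \<open>x0 \<noteq> x9\<close> by auto
  have e0_11_0: "\<not> (x0 = 0 \<and> x11 = 0)" using \<open>x0 \<noteq> x11\<close> by auto
  have e0_11_1: "\<not> (x0 = 1 \<and> x11 = 1)" using \<open>x0 \<noteq> x11\<close> by auto
  have e0_11_2: "\<not> (x0 = 2 \<and> x11 = 2)" using \<open>x0 \<noteq> x11\<close> by auto
  have e0_12_0: "\<not> (x0 = 0 \<and> x12 = 0)" using \<open>x0 \<noteq> x12\<close> by auto
  have e0_12_1: "\<not> (x0 = 1 \<and> x12 = 1)" using \<open>x0 \<noteq> x12\<close> by auto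
  have e0_12_2: "\<not> (x0 = 2 \<and> x12 = 2)" using \<open>x0 \<noteq> x12\<close> by auto
  have e1_6_0: "\<not> (x1 = 0 \<and> x6 = 0)" using \<open>x1 \<noteq> x6\<close> by auto
  have e1_6_1: "\<not> (x1 = 1 \<and> x6 = 1)" using \<open>x1 \<noteq> x6\<close> by auto
  have e1_6_2: "\<not> (x1 = 2 \<and> x6 = 2)" using \<open>x1 \<noteq> x6\<close> by auto
  have e1_7_0: "\<not> (x1 = 0 \<and> x7 = 0)" using \<open>x1 \<noteq> x7\<close> by auto
  have e1_7_1: "\<not> (x1 = 1 \<and> x7 = 1)" using \<open>x1 \<noteq> x7\<close> by auto
  have e1_7_2: "\<not> (x1 = 2 \<and> x7 = 2)" using \<open>x1 \<noteq> x7\<close> by auto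
  have e1_8_0: "\<not> (x1 = 0 \<and> x8 = 0)" using \<open>x1 \<noteq> x8\<close> by auto
  have e1_8_1: "\<not> (x1 = 1 \<and> x8 = 1)" using \<open>x1 \<noteq> x8\<close> by auto
  have e1_8_2: "\<not> (x1 = 2 \<and> x8 = 2)" using \<open>x1 \<noteq> x8\<close> by auto
  have e1_11_0: "\<not> (x1 = 0 \<and> x11 = 0)" using \<open>x1 \<noteq> x11\<close> by auto
  have e1_11_1: "\<not> (x1 = 1 \<and> x11 = 1)" using \<open>x1 \<noteq> x11\<close> by auto
  have e1_11_2: "\<not> (x1 = 2 \<and> x11 = 2)" using \<open>x1 \<noteq> x11\<close> by auto
  have e2_5_0: "\<not> (x2 = 0 \<and> x5 = 0)" using \<open>x2 \<noteq> x5\<close> by auto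
  have e2_5_1: "\<not> (x2 = 1 \<and> x5 = 1)" using \<open>x2 \<noteq> x5\<close> by auto
  have e2_5_2: "\<not> (x2 = 2 \<and> x5 = 2)" using \<open>x2 \<noteq> x5\<close> by auto
  have e2_6_0: "\<not> (x2 = 0 \<and> x6 = 0)" using \<open>x2 \<noteq> x6\<close> by auto
  have e2_6_1: "\<not> (x2 = 1 \<and> x6 = 1)" using \<open>x2 \<noteq> x6\<close> by auto
  have e2_6_2: "\<not> (x2 = 2 \<and> x6 = 2)" using \<open>x2 \<noteq> x6\<close> by auto
  have e2_8_0: "\<not> (x2 = 0 \<and> x8 = 0)" using \<open>x2 \<noteq> x8\<close> by auto
  have e2_8_1: "\<not> (x2 = 1 \<and> x8 = 1)" using \<open>x2 \<noteq> x8\<close> by auto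
  have e2_8_2: "\<not> (x2 = 2 \<and> x8 = 2)" using \<open>x2 \<noteq> x8\<close> by auto
  have e2_9_0: "\<not> (x2 = 0 \<and> x9 = 0)" using \<open>x2 \<noteq> x9\<close> by auto
  have e2_9_1: "\<not> (x2 = 1 \<and> x9 = 1)" using \<open>x2 \<noteq> x9\<close> by auto
  have e2_9_2: "\<not> (x2 = 2 \<and> x9 = 2)" using \<open>x2 \<noteq> x9\<close> by auto
  have e5_7_0: "\<not> (x5 = 0 \<and> x7 = 0)" using \<open>x5 \<noteq> x7\<close> by auto
  have e5_7_1: "\<not> (x5 = 1 \<and> x7 = 1)" using \<open>x5 \<noteq> x7\<close> by auto
  have e5_7_2: "\<not> (x5 = 2 \<and> x7 = 2)" using \<open>x5 \<noteq> x7\<close> by auto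
  have e5_11_0: "\<not> (x5 = 0 \<and> x11 = 0)" using \<open>x5 \<noteq> x11\<close> by auto
  have e5_11_1: "\<not> (x5 = 1 \<and> x11 = 1)" using \<open>x5 \<noteq> x11\<close> by auto
  have e5_11_2: "\<not> (x5 = 2 \<and> x11 = 2)" using \<open>x5 \<noteq> x11\<close> by auto
  have e6_11_0: "\<not> (x6 = 0 \<and> x11 = 0)" using \<open>x6 \<noteq> x11\<close> by auto
  have e6_11_1: "\<not> (x6 = 1 \<and> x11 = 1)" using \<open>x6 \<noteq> x11\<close> by auto
  have e6_11_2: "\<not> (x6 = 2 \<and> x11 = 2)" using \<open>x6 \<noteq> x11\<close> by auto
  have e6_12_0: "\<not> (x6 = 0 \<and> x12 = 0)" using \<open>x6 \<noteq> x12\<close> by auto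
  have e6_12_1: "\<not> (x6 = 1 \<and> x12 = 1)" using \<open>x6 \<noteq> x12\<close> by auto
  have e6_12_2: "\<not> (x6 = 2 \<and> x12 = 2)" using \<open>x6 \<noteq> x12\<close> by auto
  have e7_9_0: "\<not> (x7 = 0 \<and> x9 = 0)" using \<open>x7 \<noteq> x9\<close> by auto
  have e7_9_1: "\<not> (x7 = 1 \<and> x9 = 1)" using \<open>x7 \<noteq> x9\<close> by auto
  have e7_9_2: "\<not> (x7 = 2 \<and> x9 = 2)" using \<open>x7 \<noteq> x9\<close> by auto
  have e7_12_0: "\<not> (x7 = 0 \<and> x12 = 0)" using \<open>x7 \<noteq> x12\<close> by auto
  have e7_12_1: "\<not> (x7 = 1 \<and> x12 = 1)" using \<open>x7 \<noteq> x12\<close> by auto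
  have e7_12_2: "\<not> (x7 = 2 \<and> x12 = 2)" using \<open>x7 \<noteq> x12\<close> by auto
  show False using v0 v1 v2 v5 v6 v7 v8 v9 v11 v12 e0_8_0 e0_8_1 e0_8_2 e0_9_0 e0_9_1 e0_9_2 e0_11_0 e0_11_1 e0_11_2 e0_12_0 e0_12_1 e0_12_2 e1_6_0 e1_6_1 e1_6_2 e1_7_0 e1_7_1 e1_7_2 e1_8_0 e1_8_1 e1_8_2 e1_11_0 e1_11_1 e1_11_2 e2_5_0 e2_5_1 e2_5_2 e2_6_0 e2_6_1 e2_6_2 e2_8_0 e2_8_1 e2_8_2 e2_9_0 e2_9_1 e2_9_2 e5_7_0 e5_7_1 e5_7_2 e5_11_0 e5_11_1 e5_11_2 e6_11_0 e6_11_1 e6_11_2 e6_12_0 e6_12_1 e6_12_2 e7_9_0 e7_9_1 e7_9_2 e7_12_0 e7_12_1 e7_12_2 by sat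
qed

lemma T6_eq: "T6 = insert {{1,3},{1,5},{3,5}} ({{{1,3},{1,4},{1,5}},{{1,3},{1,4},{4,6}},{{1,3},{3,5},{3,6}},{{1,3},{3,6},{4,6}},{{1,4},{1,5},{2,4}},{{1,4},{2,4},{4,6}},{{1,5},{2,4},{2,5}},{{1,5},{2,5},{3,5}},{{2,4},{2,5},{2,6}},{{2,4},{2,6},{4,6}},{{2,5},{2,6},{3,5}},{{2,6},{3,5},{3,6}},{{2,6},{3,6},{4,6}}}::nat set set set)"
proof (rule equalityI)
  show "T6 \<subseteq> insert {{1,3},{1,5},{3,5}} ({{{1,3},{1,4},{1,5}},{{1,3},{1,4},{4,6}},{{1,3},{3,5},{3,6}},{{1,3},{3,6},{4,6}},{{1,4},{1,5},{2,4}},{{1,4},{2,4},{4,6}},{{1,5},{2,4},{2,5}},{{1,5},{2,5},{3,5}},{{2,4},{2,5},{2,6}},{{2,4},{2,6},{4,6}},{{2,5},{2,6},{3,5}},{{2,6},{3,5},{3,6}},{{2,6},{3,6},{4,6}}}::nat set set set)" by (rule T6_sub)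
next
  show "insert {{1,3},{1,5},{3,5}} ({{{1,3},{1,4},{1,5}},{{1,3},{1,4},{4,6}},{{1,3},{3,5},{3,6}},{{1,3},{3,6},{4,6}},{{1,4},{1,5},{2,4}},{{1,4},{2,4},{4,6}},{{1,5},{2,4},{2,5}},{{1,5},{2,5},{3,5}},{{2,4},{2,5},{2,6}},{{2,4},{2,6},{4,6}},{{2,5},{2,6},{3,5}},{{2,6},{3,5},{3,6}},{{2,6},{3,6},{4,6}}}::nat set set set) \<subseteq> T6"
    by (simp only: insert_subset empty_subsetI T6_0 T6_1 T6_2 T6_3 T6_4 T6_5 T6_6 T6_7 T6_8 T6_9 T6_10 T6_11 T6_12 T6_13 simp_thms)
qed

lemma diff_single: "d \<notin> F \<Longrightarrow> insert d F - {d} = F" by blast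
lemma notin_by_prop: "\<forall>x\<in>F. \<not> P x \<Longrightarrow> P d \<Longrightarrow> d \<notin> F" by blast

lemma F_eq: "T6 - {{{1,3},{1,5},{3,5}}} = ({{{1,3},{1,4},{1,5}},{{1,3},{1,4},{4,6}},{{1,3},{3,5},{3,6}},{{1,3},{3,6},{4,6}},{{1,4},{1,5},{2,4}},{{1,4},{2,4},{4,6}},{{1,5},{2,4},{2,5}},{{1,5},{2,5},{3,5}},{{2,4},{2,5},{2,6}},{{2,4},{2,6},{4,6}},{{2,5},{2,6},{3,5}},{{2,6},{3,5},{3,6}},{{2,6},{3,6},{4,6}}}::nat set set set)"
proof -
  have "\<forall>x\<in>({{{1,3},{1,4},{1,5}},{{1,3},{1,4},{4,6}},{{1,3},{3,5},{3,6}},{{1,3},{3,6},{4,6}},{{1,4},{1,5},{2,4}},{{1,4},{2,4},{4,6}},{{1,5},{2,4},{2,5}},{{1,5},{2,5},{3,5}},{{2,4},{2,5},{2,6}},{{2,4},{2,6},{4,6}},{{2,5},{2,6},{3,5}},{{2,6},{3,5},{3,6}},{{2,6},{3,6},{4,6}}}::nat set set set). \<not> ({1,3} \<in> x \<and> {1,5} \<in> x \<and> {3,5} \<in> x)" by (simp add: doubleton_eq_iff)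
  from this have "{{1,3},{1,5},{3,5}} \<notin> ({{{1,3},{1,4},{1,5}},{{1,3},{1,4},{4,6}},{{1,3},{3,5},{3,6}},{{1,3},{3,6},{4,6}},{{1,4},{1,5},{2,4}},{{1,4},{2,4},{4,6}},{{1,5},{2,4},{2,5}},{{1,5},{2,5},{3,5}},{{2,4},{2,5},{2,6}},{{2,4},{2,6},{4,6}},{{2,5},{2,6},{3,5}},{{2,6},{3,5},{3,6}},{{2,6},{3,6},{4,6}}}::nat set set set)" by (rule notin_by_prop[where P = "\<lambda>x. {1,3} \<in> x \<and> {1,5} \<in> x \<and> {3,5} \<in> x"]) simp
  then show ?thesis unfolding T6_eq by (rule diff_single)
qed

definition col :: "nat set set \<Rightarrow> nat" where
  "col T = (if {1,3} \<in> T then 0 else if {2,4} \<in> T then 1 else if {3,5} \<in> T then 2 else 3)"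

lemma col0: "col T = 0 \<Longrightarrow> {1,3} \<in> T"
  unfolding col_def by (cases "{1,3} \<in> T"; cases "{2,4} \<in> T"; cases "{3,5} \<in> T") simp_all
lemma col1: "col T = 1 \<Longrightarrow> {2,4} \<in> T"
  unfolding col_def by (cases "{1,3} \<in> T"; cases "{2,4} \<in> T"; cases "{3,5} \<in> T") simp_all
lemma col2: "col T = 2 \<Longrightarrow> {3,5} \<in> T"
  unfolding col_def by (cases "{1,3} \<in> T"; cases "{2,4} \<in> T"; cases "{3,5} \<in> T") simp_all
lemma col3: "col T = 3 \<Longrightarrow> {1,3} \<notin> T \<and> {2,4} \<notin> T \<and> {3,5} \<notin> T"
  unfolding col_def by (cases "{1,3} \<in> T"; cases "{2,4} \<in> T"; cases "{3,5} \<in> T") simp_all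

lemma col_ok: "kneser_colouring ({{{1,3},{1,4},{1,5}},{{1,3},{1,4},{4,6}},{{1,3},{3,5},{3,6}},{{1,3},{3,6},{4,6}},{{1,4},{1,5},{2,4}},{{1,4},{2,4},{4,6}},{{1,5},{2,4},{2,5}},{{1,5},{2,5},{3,5}},{{2,4},{2,5},{2,6}},{{2,4},{2,6},{4,6}},{{2,5},{2,6},{3,5}},{{2,6},{3,5},{3,6}},{{2,6},{3,6},{4,6}}}::nat set set set) 4 col"
proof -
  have a: "x \<in> ({{{1,3},{1,4},{1,5}},{{1,3},{1,4},{4,6}},{{1,3},{3,5},{3,6}},{{1,3},{3,6},{4,6}},{{1,4},{1,5},{2,4}},{{1,4},{2,4},{4,6}},{{1,5},{2,4},{2,5}},{{1,5},{2,5},{3,5}},{{2,4},{2,5},{2,6}},{{2,4},{2,6},{4,6}},{{2,5},{2,6},{3,5}},{{2,6},{3,5},{3,6}},{{2,6},{3,6},{4,6}}}::nat set set set) \<Longrightarrow> {1,3} \<notin> x \<Longrightarrow> {2,4} \<notin> x \<Longrightarrow> {3,5} \<notin> x \<Longrightarrow> x = {{2,6},{3,6},{4,6}}" for x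
    by (auto simp: doubleton_eq_iff)
  show ?thesis unfolding kneser_colouring_def
  proof (intro conjI ballI impI)
    fix x assume "x \<in> ({{{1,3},{1,4},{1,5}},{{1,3},{1,4},{4,6}},{{1,3},{3,5},{3,6}},{{1,3},{3,6},{4,6}},{{1,4},{1,5},{2,4}},{{1,4},{2,4},{4,6}},{{1,5},{2,4},{2,5}},{{1,5},{2,5},{3,5}},{{2,4},{2,5},{2,6}},{{2,4},{2,6},{4,6}},{{2,5},{2,6},{3,5}},{{2,6},{3,5},{3,6}},{{2,6},{3,6},{4,6}}}::nat set set set)" show "col x < 4" unfolding col_def by simp
  next
    fix x y assume xy: "x \<in> ({{{1,3},{1,4},{1,5}},{{1,3},{1,4},{4,6}},{{1,3},{3,5},{3,6}},{{1,3},{3,6},{4,6}},{{1,4},{1,5},{2,4}},{{1,4},{2,4},{4,6}},{{1,5},{2,4},{2,5}},{{1,5},{2,5},{3,5}},{{2,4},{2,5},{2,6}},{{2,4},{2,6},{4,6}},{{2,5},{2,6},{3,5}},{{2,6},{3,5},{3,6}},{{2,6},{3,6},{4,6}}}::nat set set set)" "y \<in> ({{{1,3},{1,4},{1,5}},{{1,3},{1,4},{4,6}},{{1,3},{3,5},{3,6}},{{1,3},{3,6},{4,6}},{{1,4},{1,5},{2,4}},{{1,4},{2,4},{4,6}},{{1,5},{2,4},{2,5}},{{1,5},{2,5},{3,5}},{{2,4},{2,5},{2,6}},{{2,4},{2,6},{4,6}},{{2,5},{2,6},{3,5}},{{2,6},{3,5},{3,6}},{{2,6},{3,6},{4,6}}}::nat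 set set set)" "x \<noteq> y \<and> x \<inter> y = {}"
    show "col x \<noteq> col y"
    proof
      assume "col x = col y"
      moreover have "col x \<le> 3" unfolding col_def by simp
      ultimately have "col x = 0 \<or> col x = 1 \<or> col x = 2 \<or> col x = 3" by linarith
      then show False
      proof (elim disjE)
        assume h: "col x = 0"
        then have "{1,3} \<in> x" "{1,3} \<in> y" using \<open>col x = col y\<close> col0 by metis+
        then show False using xy(3) by blast
      next
        assume h: "col x = 1"
        then have "{2,4} \<in> x" "{2,4} \<in> y" using \<open>col x = col y\<close> col1 by metis+
        then show False using xy(3) by blast
      next
        assume h: "col x = 2"
        then have "{3,5} \<in> x" "{3,5} \<in> y" using \<open>col x = col y\<close> col2 by metis+
        then show False using xy(3) by blast
      next
        assume h: "col x = 3"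
        then have hx: "{1,3} \<notin> x" "{2,4} \<notin> x" "{3,5} \<notin> x"
          and hy: "{1,3} \<notin> y" "{2,4} \<notin> y" "{3,5} \<notin> y"
          using \<open>col x = col y\<close> col3[of x] col3[of y] by simp_all
        have "x = y" using a[OF xy(1) hx] a[OF xy(2) hy] by (rule trans[OF _ sym])
        then show False using xy(3) by blast
      qed
    qed
  qed
qed

lemma kc_lt: "kneser_colouring F k c \<Longrightarrow> x \<in> F \<Longrightarrow> c x < k"
  unfolding kneser_colouring_def by blast

lemma kc_ne: "kneser_colouring F k c \<Longrightarrow> x \<in> F \<Longrightarrow> y \<in> F \<Longrightarrow> x \<noteq> {} \<Longrightarrow> x \<inter> y = {} \<Longrightarrow> c x \<noteq> c y"
  unfolding kneser_colouring_def by blast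

lemma no_col3: assumes "kneser_colouring ({{{1,3},{1,4},{1,5}},{{1,3},{1,4},{4,6}},{{1,3},{3,5},{3,6}},{{1,3},{3,6},{4,6}},{{1,4},{1,5},{2,4}},{{1,4},{2,4},{4,6}},{{1,5},{2,4},{2,5}},{{1,5},{2,5},{3,5}},{{2,4},{2,5},{2,6}},{{2,4},{2,6},{4,6}},{{2,5},{2,6},{3,5}},{{2,6},{3,5},{3,6}},{{2,6},{3,6},{4,6}}}::nat set set set) k c" "k \<le> 3" shows False
proof -
  have lt: "c3 (c x)" if "x \<in> ({{{1,3},{1,4},{1,5}},{{1,3},{1,4},{4,6}},{{1,3},{3,5},{3,6}},{{1,3},{3,6},{4,6}},{{1,4},{1,5},{2,4}},{{1,4},{2,4},{4,6}},{{1,5},{2,4},{2,5}},{{1,5},{2,5},{3,5}},{{2,4},{2,5},{2,6}},{{2,4},{2,6},{4,6}},{{2,5},{2,6},{3,5}},{{2,6},{3,5},{3,6}},{{2,6},{3,6},{4,6}}}::nat set set set)" for x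
  proof -
    have "c x < k" by (rule kc_lt[OF assms(1) that])
    then show ?thesis using assms(2) unfolding c3_def by linarith
  qed
  have ne: "\<And>x y. x \<in> ({{{1,3},{1,4},{1,5}},{{1,3},{1,4},{4,6}},{{1,3},{3,5},{3,6}},{{1,3},{3,6},{4,6}},{{1,4},{1,5},{2,4}},{{1,4},{2,4},{4,6}},{{1,5},{2,4},{2,5}},{{1,5},{2,5},{3,5}},{{2,4},{2,5},{2,6}},{{2,4},{2,6},{4,6}},{{2,5},{2,6},{3,5}},{{2,6},{3,5},{3,6}},{{2,6},{3,6},{4,6}}}::nat set set set) \<Longrightarrow> y \<in> ({{{1,3},{1,4},{1,5}},{{1,3},{1,4},{4,6}},{{1,3},{3,5},{3,6}},{{1,3},{3,6},{4,6}},{{1,4},{1,5},{2,4}},{{1,4},{2,4},{4,6}},{{1,5},{2,4},{2,5}},{{1,5},{2,5},{3,5}},{{2,4},{2,5},{2,6}},{{2,4},{2,6},{4,6}},{{2,5},{2,6},{3,5}},{{2,6},{3,5},{3,6}},{{2,6},{3,6},{4,6}}}::nat set set set) \<Longrightarrow> x \<noteq> {} \<Longrightarrow> x \<inter> y = {} \<Longrightarrow> c x \<noteq> c y"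
    by (rule kc_ne[OF assms(1)])
  have m0: "{{1,3},{1,4},{1,5}} \<in> ({{{1,3},{1,4},{1,5}},{{1,3},{1,4},{4,6}},{{1,3},{3,5},{3,6}},{{1,3},{3,6},{4,6}},{{1,4},{1,5},{2,4}},{{1,4},{2,4},{4,6}},{{1,5},{2,4},{2,5}},{{1,5},{2,5},{3,5}},{{2,4},{2,5},{2,6}},{{2,4},{2,6},{4,6}},{{2,5},{2,6},{3,5}},{{2,6},{3,5},{3,6}},{{2,6},{3,6},{4,6}}}::nat set set set)" by simp
  have l0: "c3 (c {{1,3},{1,4},{1,5}})" by (rule lt[OF m0])
  have m1: "{{1,3},{1,4},{4,6}} \<in> ({{{1,3},{1,4},{1,5}},{{1,3},{1,4},{4,6}},{{1,3},{3,5},{3,6}},{{1,3},{3,6},{4,6}},{{1,4},{1,5},{2,4}},{{1,4},{2,4},{4,6}},{{1,5},{2,4},{2,5}},{{1,5},{2,5},{3,5}},{{2,4},{2,5},{2,6}},{{2,4},{2,6},{4,6}},{{2,5},{2,6},{3,5}},{{2,6},{3,5},{3,6}},{{2,6},{3,6},{4,6}}}::nat set set set)" by simp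
  have l1: "c3 (c {{1,3},{1,4},{4,6}})" by (rule lt[OF m1])
  have m2: "{{1,3},{3,5},{3,6}} \<in> ({{{1,3},{1,4},{1,5}},{{1,3},{1,4},{4,6}},{{1,3},{3,5},{3,6}},{{1,3},{3,6},{4,6}},{{1,4},{1,5},{2,4}},{{1,4},{2,4},{4,6}},{{1,5},{2,4},{2,5}},{{1,5},{2,5},{3,5}},{{2,4},{2,5},{2,6}},{{2,4},{2,6},{4,6}},{{2,5},{2,6},{3,5}},{{2,6},{3,5},{3,6}},{{2,6},{3,6},{4,6}}}::nat set set set)" by simp
  have l2: "c3 (c {{1,3},{3,5},{3,6}})" by (rule lt[OF m2])
  have m5: "{{1,4},{2,4},{4,6}} \<in> ({{{1,3},{1,4},{1,5}},{{1,3},{1,4},{4,6}},{{1,3},{3,5},{3,6}},{{1,3},{3,6},{4,6}},{{1,4},{1,5},{2,4}},{{1,4},{2,4},{4,6}},{{1,5},{2,4},{2,5}},{{1,5},{2,5},{3,5}},{{2,4},{2,5},{2,6}},{{2,4},{2,6},{4,6}},{{2,5},{2,6},{3,5}},{{2,6},{3,5},{3,6}},{{2,6},{3,6},{4,6}}}::nat set set set)" by simp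
  have l5: "c3 (c {{1,4},{2,4},{4,6}})" by (rule lt[OF m5])
  have m6: "{{1,5},{2,4},{2,5}} \<in> ({{{1,3},{1,4},{1,5}},{{1,3},{1,4},{4,6}},{{1,3},{3,5},{3,6}},{{1,3},{3,6},{4,6}},{{1,4},{1,5},{2,4}},{{1,4},{2,4},{4,6}},{{1,5},{2,4},{2,5}},{{1,5},{2,5},{3,5}},{{2,4},{2,5},{2,6}},{{2,4},{2,6},{4,6}},{{2,5},{2,6},{3,5}},{{2,6},{3,5},{3,6}},{{2,6},{3,6},{4,6}}}::nat set set set)" by simp
  have l6: "c3 (c {{1,5},{2,4},{2,5}})" by (rule lt[OF m6])
  have m7: "{{1,5},{2,5},{3,5}} \<in> ({{{1,3},{1,4},{1,5}},{{1,3},{1,4},{4,6}},{{1,3},{3,5},{3,6}},{{1,3},{3,6},{4,6}},{{1,4},{1,5},{2,4}},{{1,4},{2,4},{4,6}},{{1,5},{2,4},{2,5}},{{1,5},{2,5},{3,5}},{{2,4},{2,5},{2,6}},{{2,4},{2,6},{4,6}},{{2,5},{2,6},{3,5}},{{2,6},{3,5},{3,6}},{{2,6},{3,6},{4,6}}}::nat set set set)" by simp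
  have l7: "c3 (c {{1,5},{2,5},{3,5}})" by (rule lt[OF m7])
  have m8: "{{2,4},{2,5},{2,6}} \<in> ({{{1,3},{1,4},{1,5}},{{1,3},{1,4},{4,6}},{{1,3},{3,5},{3,6}},{{1,3},{3,6},{4,6}},{{1,4},{1,5},{2,4}},{{1,4},{2,4},{4,6}},{{1,5},{2,4},{2,5}},{{1,5},{2,5},{3,5}},{{2,4},{2,5},{2,6}},{{2,4},{2,6},{4,6}},{{2,5},{2,6},{3,5}},{{2,6},{3,5},{3,6}},{{2,6},{3,6},{4,6}}}::nat set set set)" by simp
  have l8: "c3 (c {{2,4},{2,5},{2,6}})" by (rule lt[OF m8])
  have m9: "{{2,4},{2,6},{4,6}} \<in> ({{{1,3},{1,4},{1,5}},{{1,3},{1,4},{4,6}},{{1,3},{3,5},{3,6}},{{1,3},{3,6},{4,6}},{{1,4},{1,5},{2,4}},{{1,4},{2,4},{4,6}},{{1,5},{2,4},{2,5}},{{1,5},{2,5},{3,5}},{{2,4},{2,5},{2,6}},{{2,4},{2,6},{4,6}},{{2,5},{2,6},{3,5}},{{2,6},{3,5},{3,6}},{{2,6},{3,6},{4,6}}}::nat set set set)" by simp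
  have l9: "c3 (c {{2,4},{2,6},{4,6}})" by (rule lt[OF m9])
  have m11: "{{2,6},{3,5},{3,6}} \<in> ({{{1,3},{1,4},{1,5}},{{1,3},{1,4},{4,6}},{{1,3},{3,5},{3,6}},{{1,3},{3,6},{4,6}},{{1,4},{1,5},{2,4}},{{1,4},{2,4},{4,6}},{{1,5},{2,4},{2,5}},{{1,5},{2,5},{3,5}},{{2,4},{2,5},{2,6}},{{2,4},{2,6},{4,6}},{{2,5},{2,6},{3,5}},{{2,6},{3,5},{3,6}},{{2,6},{3,6},{4,6}}}::nat set set set)" by simp
  have l11: "c3 (c {{2,6},{3,5},{3,6}})" by (rule lt[OF m11])
  have m12: "{{2,6},{3,6},{4,6}} \<in> ({{{1,3},{1,4},{1,5}},{{1,3},{1,4},{4,6}},{{1,3},{3,5},{3,6}},{{1,3},{3,6},{4,6}},{{1,4},{1,5},{2,4}},{{1,4},{2,4},{4,6}},{{1,5},{2,4},{2,5}},{{1,5},{2,5},{3,5}},{{2,4},{2,5},{2,6}},{{2,4},{2,6},{4,6}},{{2,5},{2,6},{3,5}},{{2,6},{3,5},{3,6}},{{2,6},{3,6},{4,6}}}::nat set set set)" by simp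
  have l12: "c3 (c {{2,6},{3,6},{4,6}})" by (rule lt[OF m12])
  have n0_8: "c {{1,3},{1,4},{1,5}} \<noteq> c {{2,4},{2,5},{2,6}}" by (rule ne[OF m0 m8]) (simp_all add: doubleton_eq_iff)
  have n0_9: "c {{1,3},{1,4},{1,5}} \<noteq> c {{2,4},{2,6},{4,6}}" by (rule ne[OF m0 m9]) (simp_all add: doubleton_eq_iff)
  have n0_11: "c {{1,3},{1,4},{1,5}} \<noteq> c {{2,6},{3,5},{3,6}}" by (rule ne[OF m0 m11]) (simp_all add: doubleton_eq_iff)
  have n0_12: "c {{1,3},{1,4},{1,5}} \<noteq> c {{2,6},{3,6},{4,6}}" by (rule ne[OF m0 m12]) (simp_all add: doubleton_eq_iff)
  have n1_6: "c {{1,3},{1,4},{4,6}} \<noteq> c {{1,5},{2,4},{2,5}}" by (rule ne[OF m1 m6]) (simp_all add: doubleton_eq_iff)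
  have n1_7: "c {{1,3},{1,4},{4,6}} \<noteq> c {{1,5},{2,5},{3,5}}" by (rule ne[OF m1 m7]) (simp_all add: doubleton_eq_iff)
  have n1_8: "c {{1,3},{1,4},{4,6}} \<noteq> c {{2,4},{2,5},{2,6}}" by (rule ne[OF m1 m8]) (simp_all add: doubleton_eq_iff)
  have n1_11: "c {{1,3},{1,4},{4,6}} \<noteq> c {{2,6},{3,5},{3,6}}" by (rule ne[OF m1 m11]) (simp_all add: doubleton_eq_iff)
  have n2_5: "c {{1,3},{3,5},{3,6}} \<noteq> c {{1,4},{2,4},{4,6}}" by (rule ne[OF m2 m5]) (simp_all add: doubleton_eq_iff)
  have n2_6: "c {{1,3},{3,5},{3,6}} \<noteq> c {{1,5},{2,4},{2,5}}" by (rule ne[OF m2 m6]) (simp_all add: doubleton_eq_iff)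
  have n2_8: "c {{1,3},{3,5},{3,6}} \<noteq> c {{2,4},{2,5},{2,6}}" by (rule ne[OF m2 m8]) (simp_all add: doubleton_eq_iff)
  have n2_9: "c {{1,3},{3,5},{3,6}} \<noteq> c {{2,4},{2,6},{4,6}}" by (rule ne[OF m2 m9]) (simp_all add: doubleton_eq_iff)
  have n5_7: "c {{1,4},{2,4},{4,6}} \<noteq> c {{1,5},{2,5},{3,5}}" by (rule ne[OF m5 m7]) (simp_all add: doubleton_eq_iff)
  have n5_11: "c {{1,4},{2,4},{4,6}} \<noteq> c {{2,6},{3,5},{3,6}}" by (rule ne[OF m5 m11]) (simp_all add: doubleton_eq_iff)
  have n6_11: "c {{1,5},{2,4},{2,5}} \<noteq> c {{2,6},{3,5},{3,6}}" by (rule ne[OF m6 m11]) (simp_all add: doubleton_eq_iff)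
  have n6_12: "c {{1,5},{2,4},{2,5}} \<noteq> c {{2,6},{3,6},{4,6}}" by (rule ne[OF m6 m12]) (simp_all add: doubleton_eq_iff)
  have n7_9: "c {{1,5},{2,5},{3,5}} \<noteq> c {{2,4},{2,6},{4,6}}" by (rule ne[OF m7 m9]) (simp_all add: doubleton_eq_iff)
  have n7_12: "c {{1,5},{2,5},{3,5}} \<noteq> c {{2,6},{3,6},{4,6}}" by (rule ne[OF m7 m12]) (simp_all add: doubleton_eq_iff)
  show False by (rule no3[OF l0 l1 l2 l5 l6 l7 l8 l9 l11 l12 n0_8 n0_9 n0_11 n0_12 n1_6 n1_7 n1_8 n1_11 n2_5 n2_6 n2_8 n2_9 n5_7 n5_11 n6_11 n6_12 n7_9 n7_12])
qed

theorem proposition3p6: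
  assumes "\<Delta> = {{1, 3}, {1, 5}, {3, 5}}"
  shows "\<Delta> \<in> T6 \<and> chi_KG (T6 - {\<Delta>}) = 4"
proof
  show "\<Delta> \<in> T6" using assms T6_13 by (simp add: insert_commute)
  have "chi_KG ({{{1,3},{1,4},{1,5}},{{1,3},{1,4},{4,6}},{{1,3},{3,5},{3,6}},{{1,3},{3,6},{4,6}},{{1,4},{1,5},{2,4}},{{1,4},{2,4},{4,6}},{{1,5},{2,4},{2,5}},{{1,5},{2,5},{3,5}},{{2,4},{2,5},{2,6}},{{2,4},{2,6},{4,6}},{{2,5},{2,6},{3,5}},{{2,6},{3,5},{3,6}},{{2,6},{3,6},{4,6}}}::nat set set set) = 4" unfolding chi_KG_def
  proof (rule Least_equality)
    show "\<exists>c. kneser_colouring ({{{1,3},{1,4},{1,5}},{{1,3},{1,4},{4,6}},{{1,3},{3,5},{3,6}},{{1,3},{3,6},{4,6}},{{1,4},{1,5},{2,4}},{{1,4},{2,4},{4,6}},{{1,5},{2,4},{2,5}},{{1,5},{2,5},{3,5}},{{2,4},{2,5},{2,6}},{{2,4},{2,6},{4,6}},{{2,5},{2,6},{3,5}},{{2,6},{3,5},{3,6}},{{2,6},{3,6},{4,6}}}::nat set set set) 4 c" using col_ok by blast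
    fix k assume "\<exists>c. kneser_colouring ({{{1,3},{1,4},{1,5}},{{1,3},{1,4},{4,6}},{{1,3},{3,5},{3,6}},{{1,3},{3,6},{4,6}},{{1,4},{1,5},{2,4}},{{1,4},{2,4},{4,6}},{{1,5},{2,4},{2,5}},{{1,5},{2,5},{3,5}},{{2,4},{2,5},{2,6}},{{2,4},{2,6},{4,6}},{{2,5},{2,6},{3,5}},{{2,6},{3,5},{3,6}},{{2,6},{3,6},{4,6}}}::nat set set set) k c"
    then obtain c where kc: "kneser_colouring ({{{1,3},{1,4},{1,5}},{{1,3},{1,4},{4,6}},{{1,3},{3,5},{3,6}},{{1,3},{3,6},{4,6}},{{1,4},{1,5},{2,4}},{{1,4},{2,4},{4,6}},{{1,5},{2,4},{2,5}},{{1,5},{2,5},{3,5}},{{2,4},{2,5},{2,6}},{{2,4},{2,6},{4,6}},{{2,5},{2,6},{3,5}},{{2,6},{3,5},{3,6}},{{2,6},{3,6},{4,6}}}::nat set set set) k c" by blast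
    show "4 \<le> k"
    proof (rule ccontr)
      assume "\<not> 4 \<le> k"
      then have "k \<le> 3" by simp
      from no_col3[OF kc this] show False .
    qed
  qed
  then show "chi_KG (T6 - {\<Delta>}) = 4" using assms F_eq by simp
qed

end
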